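(* There exists a constant $C>0$ such that for any $b\in C_c^\infty(\mathscr H^{n-1})$, $\eta\in(0,\infty)$, $f\in L^1_{\rm loc}(\mathscr H^{n-1})$ and $g\in\mathscr H^{n-1}$, $$\big|[b,\mathcal C_\eta]f(g)-[b,\mathcal C]f(g)\big|\le C\eta\,\|\nabla_H b\|_{L^\infty(\mathscr H^{n-1})}\,\mathcal M f(g).$$
   Context: $\mathscr H^{n-1}$ ($n\ge2$) is $\mathbb R^3\times\mathbb R^{4(n-1)}$ with points $(t,y)$, $t=(t_1,t_2,t_3)$, $y=(y_1,\dots,y_{4n-4})$, and group law $(t,y)\cdot(t',y')=\big(t_\alpha+t'_\alpha+2\sum_{l}\sum_{j,k=1}^4b^\alpha_{kj}y_{4l+k}y'_{4l+j},\,y+y'\big)_{\alpha=1,2,3}$, where $b^1,b^2,b^3$ are the $4\times4$ matrices with rows $b^1=((0,1,0,0),(-1,0,0,0),(0,0,0,-1),(0,0,1,0))$, $b^2=((0,0,1,0),(0,0,0,1),(-1,0,0,0),(0,-1,0,0))$, $b^3=((0,0,0,1),(0,0,-1,0),(0,1,0,0),(-1,0,0,0))$ (this is the quaternionic Heisenberg group law $(t+t'+2\operatorname{Im}\langle y,y'\rangle,y+y')$). Norm $\|(t,y)\|=(|y|^4+|t|^2)^{1/4}$, quasi-distance $\rho(g,h)=\|h^{-1}\cdot g\|$, balls $B(g,r)$, $Q=4n+2$. Left-invariant horizontal fields $Y_{4l+j}=\partial_{y_{4l+j}}+2\sum_{\alpha=1}^3\sum_{k=1}^4b^\alpha_{kj}y_{4l+k}\partial_{t_\alpha}$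 ($l=0,\dots,n-2$, $j=1,\dots,4$) and $\nabla_H=(Y_1,\dots,Y_{4n-4})$. Cauchy--Szeg\"o kernel: $K(g,h)=K(h^{-1}\cdot g)$ with $K(t,y)=s(|y|^2+t_1{\bf i}+t_2{\bf j}+t_3{\bf k})$, $s(\sigma)=c_{n-1}\partial_{x_1}^{2(n-1)}(\bar\sigma/|\sigma|^4)$ for quaternions $\sigma=x_1+x_2{\bf i}+x_3{\bf j}+x_4{\bf k}$, with $c_{n-1}$ the real constant making this the Cauchy--Szeg\"o kernel; $\mathcal C f(g)=\mathrm{p.v.}\int K(g,u)f(u)\,du$ and $[b,\mathcal C]f(g)=\int(b(g)-b(u))K(g,u)f(u)\,du$. Fix $\varphi\in C^\infty(\mathbb R)$ with $\varphi\equiv0$ on $(-\infty,1/2)$, $0\le\varphi\le1$ on $[1/2,1]$, $\varphi\equiv1$ on $(1,\infty)$; $K_\eta(g,u)=K(g,u)\varphi(\rho(g,u)/\eta)$, $[b,\mathcal C_\eta]f(g)=\int(b(g)-b(u))K_\eta(g,u)f(u)\,du$. $\mathcal M$ is the Hardy--Littlewood maximal operator over balls containing $g$. *)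

theory Defs
  imports "HOL-Analysis.Analysis"
begin

text \<open>Quaternions are modelled as real^4, components 1,2,3,4 = real, i, j, k parts.\<close>

definition qmult :: "real^4 \<Rightarrow> real^4 \<Rightarrow> real^4" where
  "qmult a b = vector
     [a$1*b$1 - a$2*b$2 - a$3*b$3 - a$4*b$4,
      a$1*b$2 + a$2*b$1 + a$3*b$4 - a$4*b$3,
      a$1*b$3 - a$2*b$4 + a$3*b$1 + a$4*b$2,
      a$1*b$4 + a$2*b$3 - a$3*b$2 + a$4*b$1]"

definition qconj :: "real^4 \<Rightarrow> real^4" where
  "qconj a = vector [a$1, - a$2, - a$3, - a$4]"

text \<open>Points of the quaternionic Heisenberg group H^{n-1}: (t,y) with t in R^3 and
  y = (y_l)_{l} with y_l in R^4, l ranging over the finite type 'm with CARD('m) = n - 1.\<close>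

type_synonym 'm hpt = "(real^3) \<times> ((real^4)^'m)"

definition bmat :: "real^4^4^3" where
  "bmat = vector
     [vector [vector [0,1,0,0], vector [-1,0,0,0], vector [0,0,0,-1], vector [0,0,1,0]],
      vector [vector [0,0,1,0], vector [0,0,0,1], vector [-1,0,0,0], vector [0,-1,0,0]],
      vector [vector [0,0,0,1], vector [0,0,-1,0], vector [0,1,0,0], vector [-1,0,0,0]]]"

definition hmult :: "'m::finite hpt \<Rightarrow> 'm hpt \<Rightarrow> 'm hpt" where
  "hmult p q =
     ((\<chi> \<alpha>. fst p $ \<alpha> + fst q $ \<alpha> + 2 * (\<Sum>l\<in>UNIV. \<Sum>k\<in>UNIV. \<Sum>j\<in>UNIV.
                bmat $ \<alpha> $ k $ j * (snd p $ l) $ k * (snd q $ l) $ j)), snd p + snd q)"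

text \<open>Group inverse (t,y)^{-1} = (-t,-y) (the bilinear form is antisymmetric).\<close>
definition hinv :: "'m::finite hpt \<Rightarrow> 'm hpt" where
  "hinv p = (- fst p, - snd p)"

definition hnorm :: "'m::finite hpt \<Rightarrow> real" where
  "hnorm p = (norm (snd p) ^ 4 + norm (fst p) ^ 2) powr (1/4)"

definition hrho :: "'m::finite hpt \<Rightarrow> 'm hpt \<Rightarrow> real" where
  "hrho g h = hnorm (hmult (hinv h) g)"

definition hball :: "'m::finite hpt \<Rightarrow> real \<Rightarrow> 'm hpt set" where
  "hball h r = {u. hrho u h < r}"

text \<open>Cauchy--Szego kernel. c is the normalising real constant c_{n-1}; m = n-1.\<close>

definition qderiv_iter :: "nat \<Rightarrow> (real \<Rightarrow> real^4) \<Rightarrow> real \<Rightarrow> real^4" where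
  "qderiv_iter k F = ((\<lambda>G x. vector_derivative G (at x)) ^^ k) F"

definition szego_s :: "real \<Rightarrow> nat \<Rightarrow> real^4 \<Rightarrow> real^4" where
  "szego_s c m \<sigma> = c *\<^sub>R qderiv_iter (2*m)
      (\<lambda>x. let q = \<sigma> + (x - \<sigma>$1) *\<^sub>R axis 1 1 in (1 / norm q ^ 4) *\<^sub>R qconj q) (\<sigma>$1)"

definition szego_K :: "real \<Rightarrow> 'm::finite hpt \<Rightarrow> real^4" where
  "szego_K c p =
      szego_s c CARD('m) (vector [norm (snd p) ^ 2, fst p $ 1, fst p $ 2, fst p $ 3])"

definition comm_C :: "real \<Rightarrow> ('m::finite hpt \<Rightarrow> real) \<Rightarrow> ('m hpt \<Rightarrow> real^4) \<Rightarrow> 'm hpt \<Rightarrow> real^4" where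
  "comm_C c b f g = (\<integral>u. (b g - b u) *\<^sub>R qmult (szego_K c (hmult (hinv u) g)) (f u) \<partial>lborel)"

definition comm_C_eta :: "(real \<Rightarrow> real) \<Rightarrow> real \<Rightarrow> real \<Rightarrow> ('m::finite hpt \<Rightarrow> real)
    \<Rightarrow> ('m hpt \<Rightarrow> real^4) \<Rightarrow> 'm hpt \<Rightarrow> real^4" where
  "comm_C_eta \<phi> \<eta> c b f g = (\<integral>u. (b g - b u) *\<^sub>R
      (\<phi> (hrho g u / \<eta>) *\<^sub>R qmult (szego_K c (hmult (hinv u) g)) (f u)) \<partial>lborel)"

definition maxfun :: "('m::finite hpt \<Rightarrow> real^4) \<Rightarrow> 'm hpt \<Rightarrow> ennreal" where
  "maxfun f g = (SUP hr \<in> {(h,r). 0 < r \<and> g \<in> hball h r}.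
      (\<integral>\<^sup>+ u \<in> hball (fst hr) (snd hr). ennreal (norm (f u)) \<partial>lborel)
        / emeasure lborel (hball (fst hr) (snd hr)))"

text \<open>Horizontal vector fields Y_{4l+j}, applied to a differentiable b.\<close>
definition Ydir :: "'m::finite \<Rightarrow> 4 \<Rightarrow> 'm hpt \<Rightarrow> 'm hpt" where
  "Ydir l j p =
     ((\<chi> \<alpha>. 2 * (\<Sum>k\<in>UNIV. bmat $ \<alpha> $ k $ j * (snd p $ l) $ k)), (\<chi> l'. if l' = l then axis j 1 else 0))"

definition Yfield :: "'m::finite \<Rightarrow> 4 \<Rightarrow> ('m hpt \<Rightarrow> real) \<Rightarrow> 'm hpt \<Rightarrow> real" where
  "Yfield l j b p = frechet_derivative b (at p) (Ydir l j p)"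

definition gradH_norm :: "('m::finite hpt \<Rightarrow> real) \<Rightarrow> 'm hpt \<Rightarrow> real" where
  "gradH_norm b p = sqrt (\<Sum>l\<in>UNIV. \<Sum>j\<in>UNIV. (Yfield l j b p)^2)"

definition gradH_Linf :: "('m::finite hpt \<Rightarrow> real) \<Rightarrow> real" where
  "gradH_Linf b = (SUP p. gradH_norm b p)"

text \<open>Smoothness: all iterated directional derivatives exist (hence C^infinity).\<close>
fun iter_dd :: "'a::real_normed_vector list \<Rightarrow> ('a \<Rightarrow> real) \<Rightarrow> 'a \<Rightarrow> real" where
  "iter_dd [] f = f"
| "iter_dd (v # vs) f = (\<lambda>x. frechet_derivative (iter_dd vs f) (at x) v)"

definition smooth_fun :: "('a::real_normed_vector \<Rightarrow> real) \<Rightarrow> bool" where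
  "smooth_fun f \<longleftrightarrow> (\<forall>vs x. iter_dd vs f differentiable (at x))"

definition Cc_infty :: "('a::real_normed_vector \<Rightarrow> real) \<Rightarrow> bool" where
  "Cc_infty f \<longleftrightarrow> smooth_fun f \<and> compact (closure {x. f x \<noteq> 0})"

definition L1_loc :: "('m::finite hpt \<Rightarrow> real^4) \<Rightarrow> bool" where
  "L1_loc f \<longleftrightarrow> (\<forall>K. compact K \<longrightarrow> set_integrable lborel K f)"

end

theory Submission
  imports Defs "HOL-Complex_Analysis.Complex_Analysis"
begin

lemma vector_4 [simp]:
 "(vector [x,y,z,w] ::('a::zero)^4)$1 = x"
 "(vector [x,y,z,w] ::('a::zero)^4)$2 = y"
 "(vector [x,y,z,w] ::('a::zero)^4)$3 = z"
 "(vector [x,y,z,w] ::('a::zero)^4)$4 = w"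
  unfolding vector_def by simp_all
lemma bmat_antisym_all: "\<forall>a k j. bmat $ a $ k $ j = - bmat $ a $ j $ k"
  unfolding forall_3 forall_4 by (simp add: bmat_def)
lemma bmat_antisym: "bmat $ a $ k $ j = - bmat $ a $ j $ k"
  using bmat_antisym_all by blast

definition Bf :: "(real^4)^'m::finite \<Rightarrow> (real^4)^'m \<Rightarrow> real^3" where
  "Bf y z = (\<chi> \<alpha>. \<Sum>l\<in>UNIV. \<Sum>k\<in>UNIV. \<Sum>j\<in>UNIV. bmat $ \<alpha> $ k $ j * (y $ l) $ k * (z $ l) $ j)"

lemma hmult_eq: "hmult p q = (fst p + fst q + 2 *\<^sub>R Bf (snd p) (snd q), snd p + snd q)"
  by (simp add: hmult_def Bf_def vec_eq_iff)

lemma Bf_add1: "Bf (y + y') z = Bf y z + Bf y' z"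
  by (simp add: Bf_def vec_eq_iff algebra_simps sum.distrib)
lemma Bf_add2: "Bf z (y + y') = Bf z y + Bf z y'"
  by (simp add: Bf_def vec_eq_iff algebra_simps sum.distrib)
lemma Bf_scale1: "Bf (a *\<^sub>R y) z = a *\<^sub>R Bf y z"
  by (simp add: Bf_def vec_eq_iff algebra_simps sum_distrib_left)
lemma Bf_scale2: "Bf z (a *\<^sub>R y) = a *\<^sub>R Bf z y"
  by (simp add: Bf_def vec_eq_iff algebra_simps sum_distrib_left)
lemma Bf_antisym: "Bf y z = - Bf z y"
proof -
  have "\<And>a l. (\<Sum>k\<in>UNIV. \<Sum>j\<in>UNIV. bmat $ a $ k $ j * (y $ l) $ k * (z $ l) $ j)
     = - (\<Sum>k\<in>UNIV. \<Sum>j\<in>UNIV. bmat $ a $ k $ j * (z $ l) $ k * (y $ l) $ j)"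
    apply (subst sum.swap)
    apply (simp add: sum_negf[symmetric])
    apply (subst bmat_antisym)
    by (simp add: algebra_simps)
  then show ?thesis by (simp add: Bf_def vec_eq_iff sum_negf[symmetric])
qed
lemma Bf_self: "Bf y y = 0"
proof -
  have "\<And>i. Bf y y $ i = - Bf y y $ i" using Bf_antisym[of y y] by (simp add: vec_eq_iff)
  then show ?thesis by (simp add: vec_eq_iff)
qed
lemma Bf_neg1: "Bf (- y) z = - Bf y z"
  using Bf_scale1[of "-1" y z] by simp
lemma Bf_neg2: "Bf z (- y) = - Bf z y"
  using Bf_scale2[of z "-1" y] by simp
lemma Bf_zero1[simp]: "Bf 0 z = 0" and Bf_zero2[simp]: "Bf z 0 = 0"
  by (simp_all add: Bf_def vec_eq_iff)

lemma hmult_assoc: "hmult (hmult p q) r = hmult p (hmult q r)"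
  unfolding hmult_eq fst_conv snd_conv Bf_add1 Bf_add2 scaleR_add_right
  by (simp add: add_ac)

lemma Bf_diff2: "Bf z (y - y') = Bf z y - Bf z y'"
  using Bf_add2[of z y "- y'"] Bf_neg2[of z y'] by simp

lemma hmult_hinv_eq: "hmult (hinv p) g = (fst g - fst p - 2 *\<^sub>R Bf (snd p) (snd g), snd g - snd p)"
  unfolding hmult_eq hinv_def fst_conv snd_conv Bf_neg1 by simp

lemma hmult_hinv_left: "hmult p (hmult (hinv p) g) = g"
  unfolding hmult_hinv_eq unfolding hmult_eq fst_conv snd_conv Bf_diff2 Bf_self
  by (simp add: prod_eq_iff)

lemma hinv_hmult: "hmult (hinv u) g = hinv (hmult (hinv g) u)"
proof -
  have "Bf (snd g) (snd u) = - Bf (snd u) (snd g)" by (rule Bf_antisym)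
  then show ?thesis by (simp add: hmult_eq hinv_def Bf_neg1 Bf_neg2 algebra_simps)
qed

lemma hnorm_hinv: "hnorm (hinv p) = hnorm p"
  by (simp add: hnorm_def hinv_def)

lemma hrho_sym: "hrho g u = hrho u g"
  unfolding hrho_def by (metis hinv_hmult hnorm_hinv)


lemma smooth_diff: "smooth_fun b \<Longrightarrow> b differentiable (at x)"
  unfolding smooth_fun_def by (metis iter_dd.simps(1))

lemma smooth_dd_cont: "smooth_fun b \<Longrightarrow> continuous_on UNIV (\<lambda>x. frechet_derivative b (at x) v)"
proof -
  assume "smooth_fun b"
  then have "\<And>x. iter_dd [v] b differentiable (at x)" unfolding smooth_fun_def by blast
  then have "\<And>x. isCont (iter_dd [v] b) x" by (simp add: differentiable_imp_continuous_within)
  then show ?thesis by (simp add: continuous_on_eq_continuous_at)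
qed

lemma linear_fd: "smooth_fun b \<Longrightarrow> linear (frechet_derivative b (at x))"
  by (rule linear_frechet_derivative[OF smooth_diff])

lemma Ydir_decomp:
  "Ydir l j p = (0, (\<chi> l'. if l' = l then axis j 1 else 0)) +
     (\<Sum>\<alpha>\<in>UNIV. (2 * (\<Sum>k\<in>UNIV. bmat $ \<alpha> $ k $ j * (snd p $ l) $ k)) *\<^sub>R (axis \<alpha> 1, 0))"
  by (simp add: Ydir_def vec_eq_iff fst_sum snd_sum axis_def prod_eq_iff if_distrib cong: if_cong)

lemma Yfield_decomp: assumes "smooth_fun b"
  shows "Yfield l j b p = frechet_derivative b (at p) (0, (\<chi> l'. if l' = l then axis j 1 else 0)) +
     (\<Sum>\<alpha>\<in>UNIV. (2 * (\<Sum>k\<in>UNIV. bmat $ \<alpha> $ k $ j * (snd p $ l) $ k)) * frechet_derivative b (at p) (axis \<alpha> 1, 0))"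
proof -
  have lin: "linear (frechet_derivative b (at p))" using linear_fd[OF assms] .
  show ?thesis
  unfolding Yfield_def Ydir_decomp
  by (simp only: linear_add[OF lin] linear_sum[OF lin] linear_scale[OF lin] o_def real_scaleR_def)
qed

lemma Yfield_cont: assumes "smooth_fun b" shows "continuous_on UNIV (Yfield l j b)"
  unfolding Yfield_decomp[OF assms, abs_def]
  by (intro continuous_intros smooth_dd_cont assms)

lemma gradH_cont: assumes "smooth_fun b" shows "continuous_on UNIV (gradH_norm b)"
  unfolding gradH_norm_def[abs_def]
  by (intro continuous_intros Yfield_cont assms)

lemma gradH_nonneg: "0 \<le> gradH_norm b p"
  by (simp add: gradH_norm_def sum_nonneg)

lemma gradH_zero_outside:
  assumes "smooth_fun b" "p \<notin> closure {x. b x \<noteq> 0}"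
  shows "gradH_norm b p = 0"
proof -
  let ?X = "- closure {x. b x \<noteq> 0}"
  have "frechet_derivative b (at p) = frechet_derivative (\<lambda>x. 0::real) (at p)"
    apply (rule frechet_derivative_transform_within_open[of b p ?X])
    using assms smooth_diff closure_subset[of "{x. b x \<noteq> 0}"] by auto
  then show ?thesis by (simp add: gradH_norm_def Yfield_def)
qed

lemma gradH_bdd: assumes "Cc_infty b" shows "bdd_above (range (gradH_norm b))"
proof -
  let ?K = "closure {x. b x \<noteq> 0}"
  have sm: "smooth_fun b" and K: "compact ?K" using assms by (auto simp: Cc_infty_def)
  have "compact (gradH_norm b ` ?K)"
    by (rule compact_continuous_image[OF continuous_on_subset[OF gradH_cont[OF sm]] K]) auto
  then obtain M where M: "\<And>p. p \<in> ?K \<Longrightarrow> gradH_norm b p \<le> M"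
  proof -
    obtain a where "\<forall>x\<in>gradH_norm b ` ?K. \<bar>x\<bar> \<le> a"
      using compact_imp_bounded[OF \<open>compact (gradH_norm b ` ?K)\<close>] unfolding bounded_real by blast
    then show ?thesis using that by (meson abs_ge_self image_eqI order_trans)
  qed
  have "gradH_norm b p \<le> max M 0" for p
    using M[of p] gradH_zero_outside[OF sm, of p] by (cases "p \<in> ?K") auto
  then show ?thesis by (intro bdd_aboveI[where M="max M 0"]) blast
qed

lemma gradH_le_Linf: "Cc_infty b \<Longrightarrow> gradH_norm b p \<le> gradH_Linf b"
  unfolding gradH_Linf_def by (rule cSUP_upper[OF _ gradH_bdd]) auto

lemma gradH_Linf_nonneg: "Cc_infty b \<Longrightarrow> 0 \<le> gradH_Linf b"
  using gradH_le_Linf gradH_nonneg order_trans by blast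


lemma Ydir_sum: "(2 *\<^sub>R Bf (snd q) w, w) = (\<Sum>l\<in>UNIV. \<Sum>j\<in>UNIV. (w $ l $ j) *\<^sub>R Ydir l j q)"
proof -
  have f: "fst (\<Sum>l\<in>UNIV. \<Sum>j\<in>UNIV. (w $ l $ j) *\<^sub>R Ydir l j q) = 2 *\<^sub>R Bf (snd q) w"
    apply (simp add: fst_sum Ydir_def Bf_def vec_eq_iff sum_distrib_left sum_distrib_right)
    apply (rule allI, rule sum.cong[OF refl])
    apply (subst sum.swap)
    by (simp add: algebra_simps)
  have s: "snd (\<Sum>l\<in>UNIV. \<Sum>j\<in>UNIV. (w $ l $ j) *\<^sub>R Ydir l j q) = w"
  proof -
    have e: "(\<chi> l'. if l' = l then axis j 1 else 0) $ i $ ia = (if i = l then (if ia = j then 1 else 0) else (0::real))"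
      for l i :: 'a and j ia :: 4
      by (simp add: axis_def)
    have "(\<Sum>l\<in>UNIV. \<Sum>j\<in>UNIV. w $ l $ j * ((\<chi> l'. if l' = l then axis j 1 else 0) $ i $ ia)) = w $ i $ ia"
      for i ia
    proof -
      have "(\<Sum>l\<in>UNIV. \<Sum>j\<in>UNIV. w $ l $ j * ((\<chi> l'. if l' = l then axis j 1 else 0) $ i $ ia))
        = (\<Sum>l\<in>UNIV. if i = l then (\<Sum>j\<in>UNIV. if ia = j then w $ l $ j else 0) else 0)"
        unfolding e by (intro sum.cong refl) (auto simp: if_distrib[of "\<lambda>x. _ * x"] cong: if_cong)
      also have "\<dots> = w $ i $ ia" by (simp add: sum.delta')
      finally show ?thesis .
    qed
    then show ?thesis by (simp add: snd_sum Ydir_def vec_eq_iff)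
  qed
  show ?thesis using f s by (simp add: prod_eq_iff)
qed

lemma fd_inner: assumes "smooth_fun b"
  shows "frechet_derivative b (at q) (\<Sum>l\<in>UNIV. \<Sum>j\<in>UNIV. (w $ l $ j) *\<^sub>R Ydir l j q)
    = inner w (\<chi> l. \<chi> j. Yfield l j b q)"
proof -
  have lin: "linear (frechet_derivative b (at q))" using linear_fd[OF assms] .
  show ?thesis
    by (simp add: linear_sum[OF lin] linear_scale[OF lin] o_def inner_vec_def Yfield_def)
qed

lemma norm_Yv: "norm (\<chi> l. \<chi> j. Yfield l j b q) = gradH_norm b q"
  by (simp add: norm_vec_def L2_set_def gradH_norm_def sum_nonneg real_sqrt_pow2)

lemma step_bound:
  assumes cc: "Cc_infty b"
  shows "\<bar>b (hmult p (0, w)) - b p\<bar> \<le> norm w * gradH_Linf b"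
proof -
  have sm: "smooth_fun b" using cc by (simp add: Cc_infty_def)
  define D where "D = (2 *\<^sub>R Bf (snd p) w, w)"
  have line: "hmult p (0, s *\<^sub>R w) = p + s *\<^sub>R D" for s
    by (simp add: hmult_eq D_def Bf_scale2 prod_eq_iff)
  have Dq: "D = (\<Sum>l\<in>UNIV. \<Sum>j\<in>UNIV. (w $ l $ j) *\<^sub>R Ydir l j (p + s *\<^sub>R D))" for s
  proof -
    have "Bf (snd (p + s *\<^sub>R D)) w = Bf (snd p) w"
      by (simp add: D_def Bf_add1 Bf_scale1 Bf_self)
    then have "D = (2 *\<^sub>R Bf (snd (p + s *\<^sub>R D)) w, w)" by (simp add: D_def)
    also have "\<dots> = (\<Sum>l\<in>UNIV. \<Sum>j\<in>UNIV. (w $ l $ j) *\<^sub>R Ydir l j (p + s *\<^sub>R D))" by (rule Ydir_sum)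
    finally show ?thesis .
  qed
  define \<phi> where "\<phi> s = b (p + s *\<^sub>R D)" for s
  have der: "DERIV \<phi> s :> frechet_derivative b (at (p + s *\<^sub>R D)) D" for s
  proof -
    have hb: "(b has_derivative frechet_derivative b (at (p + s *\<^sub>R D))) (at (p + s *\<^sub>R D))"
      using smooth_diff[OF sm] frechet_derivative_works by blast
    have hl: "((\<lambda>s. p + s *\<^sub>R D) has_derivative (\<lambda>h. h *\<^sub>R D)) (at s)"
      by (auto intro!: derivative_eq_intros)
    have "(\<phi> has_derivative (\<lambda>h. frechet_derivative b (at (p + s *\<^sub>R D)) (h *\<^sub>R D))) (at s)"
      unfolding \<phi>_def using has_derivative_compose[OF hl hb] by (simp add: o_def)
    moreover have "(\<lambda>h. frechet_derivative b (at (p + s *\<^sub>R D)) (h *\<^sub>R D))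
        = (\<lambda>h. frechet_derivative b (at (p + s *\<^sub>R D)) D * h)"
      using linear_fd[OF sm] by (simp add: linear_scale mult.commute)
    ultimately show ?thesis by (simp add: has_field_derivative_def)
  qed
  have "\<exists>z. 0 < z \<and> z < 1 \<and> \<phi> 1 - \<phi> 0 = (1 - 0) * frechet_derivative b (at (p + z *\<^sub>R D)) D"
    by (rule MVT2[OF zero_less_one der])
  then obtain z where z: "\<phi> 1 - \<phi> 0 = (1 - 0) * frechet_derivative b (at (p + z *\<^sub>R D)) D"
    by blast
  have "\<bar>frechet_derivative b (at (p + z *\<^sub>R D)) D\<bar> \<le> norm w * gradH_Linf b"
  proof -
    have "\<bar>frechet_derivative b (at (p + z *\<^sub>R D)) D\<bar> = \<bar>inner w (\<chi> l. \<chi> j. Yfield l j b (p + z *\<^sub>R D))\<bar>"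
      using arg_cong[OF Dq[of z], of "frechet_derivative b (at (p + z *\<^sub>R D))"] fd_inner[OF sm, of "p + z *\<^sub>R D" w]
      by (simp only:)
    also have "\<dots> \<le> norm w * gradH_norm b (p + z *\<^sub>R D)"
      using Cauchy_Schwarz_ineq2 norm_Yv by metis
    also have "\<dots> \<le> norm w * gradH_Linf b"
      by (rule mult_left_mono[OF gradH_le_Linf[OF cc]]) simp
    finally show ?thesis .
  qed
  moreover have "\<phi> 1 = b (hmult p (0, w))" "\<phi> 0 = b p"
    using line[of 1] by (simp_all add: \<phi>_def)
  ultimately show ?thesis using z by simp
qed


definition blk :: "'m::finite \<Rightarrow> real^4 \<Rightarrow> (real^4)^'m" where
  "blk l0 q = (\<chi> l. if l = l0 then q else 0)"

lemma norm_blk: "norm (blk l0 q) = norm q"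
proof -
  have "(\<Sum>l\<in>UNIV. (norm ((blk l0 q) $ l))\<^sup>2) = (norm q)\<^sup>2"
    by (simp add: blk_def if_distrib[of "\<lambda>x. (norm x)\<^sup>2"] cong: if_cong)
  moreover have "norm (blk l0 q) = sqrt (\<Sum>l\<in>UNIV. (norm ((blk l0 q) $ l))\<^sup>2)"
    by (subst norm_vec_def) (simp only: L2_set_def)
  ultimately show ?thesis by simp
qed

lemma pow_powr_inv: assumes "0 \<le> x" "0 < n" shows "(x ^ n) powr (1 / real n) = x"
proof (cases "x = 0")
  case True then show ?thesis using assms by simp
next
  case False
  then have "x > 0" using assms by simp
  then have "x ^ n = x powr real n" by (simp add: powr_realpow)
  then show ?thesis using assms \<open>x > 0\<close> by (simp add: powr_powr)
qed

lemma blk_scale: "blk l0 (c *\<^sub>R q) = c *\<^sub>R blk l0 q"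
  by (simp add: blk_def vec_eq_iff)
lemma blk_neg: "blk l0 (- q) = - blk l0 q"
  by (simp add: blk_def vec_eq_iff)

lemma Bf_blk: "Bf (blk l0 q1) (blk l0 q2) = (\<chi> \<alpha>. \<Sum>k\<in>UNIV. \<Sum>j\<in>UNIV. bmat $ \<alpha> $ k $ j * q1 $ k * q2 $ j)"
proof -
  have "\<And>\<alpha>. (\<Sum>l\<in>UNIV. \<Sum>k\<in>UNIV. \<Sum>j\<in>UNIV. bmat $ \<alpha> $ k $ j * (blk l0 q1 $ l) $ k * (blk l0 q2 $ l) $ j)
     = (\<Sum>l\<in>UNIV. if l = l0 then (\<Sum>k\<in>UNIV. \<Sum>j\<in>UNIV. bmat $ \<alpha> $ k $ j * q1 $ k * q2 $ j) else 0)"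
    by (intro sum.cong refl) (simp add: blk_def)
  then show ?thesis by (simp add: Bf_def vec_eq_iff)
qed

lemma Bf_special: "Bf (blk l0 (vector [x,0,0,0])) (blk l0 (vector [0,p,q,r])) = x *\<^sub>R vector [p,q,r]"
  unfolding Bf_blk vec_eq_iff forall_3 by (simp add: sum_4 bmat_def)

lemma norm4: "norm (vector [a,b,c,d] :: real^4) = sqrt (a\<^sup>2 + b\<^sup>2 + c\<^sup>2 + d\<^sup>2)"
  by (simp add: norm_vec_def L2_set_def sum_4)
lemma norm3: "norm (t :: real^3) = sqrt ((t$1)\<^sup>2 + (t$2)\<^sup>2 + (t$3)\<^sup>2)"
  by (simp add: norm_vec_def L2_set_def sum_3)

lemma vector3_eta: "vector [t$1, t$2, t$3] = (t::real^3)"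
  unfolding vec_eq_iff forall_3 by simp

lemma word_eq: "hmult (0, y) (hmult (0, a) (hmult (0, v) (hmult (0, - a) (0, - v)))) = (4 *\<^sub>R Bf a v, y)"
proof -
  have 1: "hmult (0, - a) (0, - v) = (2 *\<^sub>R Bf a v, - a - v)"
    by (simp add: hmult_eq Bf_neg1 Bf_neg2)
  have 2: "hmult (0, v) (2 *\<^sub>R Bf a v, - a - v) = (4 *\<^sub>R Bf a v, - a)"
  proof -
    have "Bf v (- a - v) = Bf a v"
      unfolding Bf_diff2 Bf_neg2 Bf_self using Bf_antisym[of v a] by simp
    then show ?thesis by (simp add: hmult_eq)
  qed
  have 3: "hmult (0, a) (4 *\<^sub>R Bf a v, - a) = (4 *\<^sub>R Bf a v, 0)"
    by (simp add: hmult_eq Bf_neg2 Bf_self)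
  have 4: "hmult (0, y) (4 *\<^sub>R Bf a v, 0) = (4 *\<^sub>R Bf a v, y)"
    by (simp add: hmult_eq)
  show ?thesis unfolding 1 2 3 4 ..
qed

lemma hnorm_y: "norm (snd h) \<le> hnorm h"
proof -
  have "norm (snd h) = (norm (snd h) ^ 4) powr (1/4)"
    using pow_powr_inv[of "norm (snd h)" 4] by simp
  also have "\<dots> \<le> hnorm h" unfolding hnorm_def
    by (rule powr_mono2) auto
  finally show ?thesis .
qed

lemma hnorm_t: "sqrt (norm (fst h)) \<le> hnorm h"
proof -
  have "sqrt (norm (fst h)) = (norm (fst h) ^ 2) powr (1/4)"
  proof -
    have "(norm (fst h) ^ 2) powr (1/4) = ((norm (fst h) ^ 2) powr (1/2)) powr (1/2)"
      by (simp only: powr_powr) simp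
    also have "\<dots> = sqrt (norm (fst h))"
      using pow_powr_inv[of "norm (fst h)" 2] by (simp add: powr_half_sqrt)
    finally show ?thesis by simp
  qed
  also have "\<dots> \<le> hnorm h" unfolding hnorm_def
    by (rule powr_mono2) auto
  finally show ?thesis .
qed

lemma path_bound:
  fixes b :: "'m::finite hpt \<Rightarrow> real"
  assumes cc: "Cc_infty b"
  shows "\<bar>b g - b u\<bar> \<le> 3 * hnorm (hmult (hinv u) g) * gradH_Linf b"
proof -
  define h where "h = hmult (hinv u) g"
  define t where "t = fst h"
  define y where "y = snd h"
  define L where "L = gradH_Linf b"
  obtain l0 :: 'm where True by simp
  define ss where "ss = sqrt (norm t) / 2"
  define cc' where "cc' = 1 / (2 * sqrt (norm t))"
  define a where "a = blk l0 (vector [ss,0,0,0])"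
  define v where "v = cc' *\<^sub>R blk l0 (vector [0, t$1, t$2, t$3])"
  have Bav: "4 *\<^sub>R Bf a v = t"
  proof (cases "t = 0")
    case True then show ?thesis by (simp add: v_def Bf_scale2 cc'_def)
  next
    case False
    then have "norm t > 0" by simp
    then have "4 * ss * cc' = 1" by (simp add: ss_def cc'_def)
    then show ?thesis unfolding a_def v_def Bf_scale2 Bf_special scaleR_scaleR vector3_eta
      by (simp add: ac_simps)
  qed
  have na: "norm a = ss" unfolding a_def norm_blk norm4 by (simp add: ss_def)
  have nv: "norm v \<le> ss"
  proof -
    have "norm v = \<bar>cc'\<bar> * norm t" unfolding v_def norm_scaleR norm_blk norm4 norm3 by simp
    also have "\<dots> \<le> ss"
    proof (cases "t = 0")
      case True then show ?thesis by (simp add: ss_def)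
    next
      case False
      then have p: "norm t > 0" by simp
      have "\<bar>cc'\<bar> * norm t = norm t / (2 * sqrt (norm t))" using p by (simp add: cc'_def)
      also have "\<dots> = sqrt (norm t) / 2" using p
        by (metis (no_types, lifting) less_eq_real_def mult.commute nonzero_mult_div_cancel_right
            real_div_sqrt real_sqrt_gt_zero times_divide_eq_right zero_less_numeral zero_neq_numeral
            divide_divide_eq_left)
      finally show ?thesis by (simp add: ss_def)
    qed
    finally show ?thesis .
  qed
  have hw: "h = hmult (0, y) (hmult (0, a) (hmult (0, v) (hmult (0, - a) (0, - v))))"
    unfolding word_eq Bav by (simp add: t_def y_def)
  define p1 where "p1 = hmult u (0, y)"
  define p2 where "p2 = hmult p1 (0, a)"
  define p3 where "p3 = hmult p2 (0, v)"
  define p4 where "p4 = hmult p3 (0, - a)"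
  define p5 where "p5 = hmult p4 (0, - v)"
  have "p5 = hmult u h" unfolding hw p5_def p4_def p3_def p2_def p1_def by (simp only: hmult_assoc)
  then have g5: "g = p5" unfolding h_def by (simp add: hmult_hinv_left)
  have s1: "\<bar>b p1 - b u\<bar> \<le> norm y * L" unfolding p1_def L_def by (rule step_bound[OF cc])
  have s2: "\<bar>b p2 - b p1\<bar> \<le> norm a * L" unfolding p2_def L_def by (rule step_bound[OF cc])
  have s3: "\<bar>b p3 - b p2\<bar> \<le> norm v * L" unfolding p3_def L_def by (rule step_bound[OF cc])
  have s4: "\<bar>b p4 - b p3\<bar> \<le> norm a * L" unfolding p4_def L_def using step_bound[OF cc] by (metis norm_minus_cancel)
  have s5: "\<bar>b p5 - b p4\<bar> \<le> norm v * L" unfolding p5_def L_def using step_bound[OF cc] by (metis norm_minus_cancel)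
  have L0: "0 \<le> L" unfolding L_def by (rule gradH_Linf_nonneg[OF cc])
  have "\<bar>b g - b u\<bar> \<le> (norm y + 2 * norm a + 2 * norm v) * L"
    using s1 s2 s3 s4 s5 g5 by (simp add: algebra_simps)
  also have "\<dots> \<le> (norm y + 2 * sqrt (norm t)) * L"
    using na nv L0 by (intro mult_right_mono) (auto simp: ss_def)
  also have "\<dots> \<le> (3 * hnorm h) * L"
    using hnorm_y[of h] hnorm_t[of h] L0 unfolding t_def y_def by (intro mult_right_mono) auto
  finally show ?thesis unfolding h_def L_def by simp
qed


definition hfun :: "real^4 \<Rightarrow> real \<Rightarrow> real^4" where
  "hfun \<sigma> = (\<lambda>x. let q = \<sigma> + (x - \<sigma>$1) *\<^sub>R axis 1 1 in (1 / norm q ^ 4) *\<^sub>R qconj q)"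

definition rr :: "real^4 \<Rightarrow> real" where "rr \<sigma> = (\<sigma>$2)\<^sup>2 + (\<sigma>$3)\<^sup>2 + (\<sigma>$4)\<^sup>2"
definition wv :: "real^4 \<Rightarrow> real^4" where "wv \<sigma> = vector [0, - \<sigma>$2, - \<sigma>$3, - \<sigma>$4]"

lemma rr_nonneg: "0 \<le> rr \<sigma>" by (simp add: rr_def)

lemma hfun_eq: "hfun \<sigma> x = (x / (x\<^sup>2 + rr \<sigma>)\<^sup>2) *\<^sub>R axis 1 1 + (1 / (x\<^sup>2 + rr \<sigma>)\<^sup>2) *\<^sub>R wv \<sigma>"
proof -
  define q where "q = \<sigma> + (x - \<sigma>$1) *\<^sub>R axis 1 (1::real)"
  have qc: "q $ 1 = x" "q $ 2 = \<sigma>$2" "q $ 3 = \<sigma>$3" "q $ 4 = \<sigma>$4"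
    by (simp_all add: q_def axis_def)
  have "norm q = sqrt (x\<^sup>2 + rr \<sigma>)"
    by (simp add: norm_vec_def L2_set_def sum_4 qc rr_def add.assoc)
  then have n2: "(norm q)\<^sup>2 = x\<^sup>2 + rr \<sigma>"
    using rr_nonneg[of \<sigma>] by simp
  have n4: "norm q ^ 4 = (x\<^sup>2 + rr \<sigma>)\<^sup>2"
    unfolding n2[symmetric] by (simp add: power4_eq_xxxx power2_eq_square)
  show ?thesis
    unfolding hfun_def Let_def q_def[symmetric] n4
    unfolding vec_eq_iff forall_4
    by (simp add: qconj_def wv_def qc axis_def)
qed

definition Fc :: "real \<Rightarrow> complex \<Rightarrow> complex" where "Fc r z = 1 / (z\<^sup>2 + of_real r)\<^sup>2"
definition Gc :: "real \<Rightarrow> complex \<Rightarrow> complex" where "Gc r z = z * Fc r z"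
definition Sc :: "real \<Rightarrow> complex set" where "Sc r = {z. z\<^sup>2 + of_real r \<noteq> 0}"

lemma open_Sc: "open (Sc r)"
  unfolding Sc_def by (rule open_Collect_neq) (intro continuous_intros)+

lemma Fc_holo: "Fc r holomorphic_on Sc r"
  unfolding Fc_def Sc_def by (intro holomorphic_intros) auto
lemma Gc_holo: "Gc r holomorphic_on Sc r"
  unfolding Gc_def by (intro holomorphic_intros Fc_holo)

lemma of_real_sq: "(complex_of_real x)\<^sup>2 + complex_of_real r = complex_of_real (x\<^sup>2 + r)" by simp

lemma Fc_real: "Fc r (of_real x) = of_real (1 / (x\<^sup>2 + r)\<^sup>2)"
  unfolding Fc_def of_real_sq by simp
lemma Gc_real: "Gc r (of_real x) = of_real (x / (x\<^sup>2 + r)\<^sup>2)"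
  unfolding Gc_def Fc_real by simp

definition Hk :: "real^4 \<Rightarrow> nat \<Rightarrow> real \<Rightarrow> real^4" where
  "Hk \<sigma> k x = Re ((deriv ^^ k) (Gc (rr \<sigma>)) (of_real x)) *\<^sub>R axis 1 1
      + Re ((deriv ^^ k) (Fc (rr \<sigma>)) (of_real x)) *\<^sub>R wv \<sigma>"

lemma deriv_step:
  assumes holo: "f holomorphic_on Sc r" and x: "x\<^sup>2 + r \<noteq> 0"
  shows "((\<lambda>x. Re ((deriv ^^ k) f (of_real x))) has_field_derivative Re ((deriv ^^ Suc k) f (of_real x))) (at x)"
proof -
  have xs: "complex_of_real x \<in> Sc r" unfolding Sc_def mem_Collect_eq of_real_sq of_real_eq_0_iff using x .
  have "((deriv ^^ k) f has_field_derivative deriv ((deriv ^^ k) f) (of_real x)) (at (of_real x))"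
    by (rule holomorphic_derivI[OF holomorphic_higher_deriv[OF holo open_Sc] open_Sc xs])
  then have "((\<lambda>x. (deriv ^^ k) f (of_real x)) has_vector_derivative (deriv ^^ Suc k) f (of_real x)) (at x)"
    using has_vector_derivative_real_field by auto
  then show ?thesis by (rule has_field_derivative_Re)
qed

lemma Hk_deriv:
  assumes x: "x\<^sup>2 + rr \<sigma> \<noteq> 0"
  shows "(Hk \<sigma> k has_vector_derivative Hk \<sigma> (Suc k) x) (at x)"
proof -
  note dG = deriv_step[OF Gc_holo x, of k] and dF = deriv_step[OF Fc_holo x, of k]
  have "((\<lambda>x. Re ((deriv ^^ k) (Gc (rr \<sigma>)) (of_real x)) *\<^sub>R axis 1 (1::real)
      + Re ((deriv ^^ k) (Fc (rr \<sigma>)) (of_real x)) *\<^sub>R wv \<sigma>) has_vector_derivative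
      (Re ((deriv ^^ k) (Gc (rr \<sigma>)) (of_real x)) *\<^sub>R 0 + Re ((deriv ^^ Suc k) (Gc (rr \<sigma>)) (of_real x)) *\<^sub>R axis 1 1)
     + (Re ((deriv ^^ k) (Fc (rr \<sigma>)) (of_real x)) *\<^sub>R 0 + Re ((deriv ^^ Suc k) (Fc (rr \<sigma>)) (of_real x)) *\<^sub>R wv \<sigma>)) (at x)"
    by (intro has_vector_derivative_add has_vector_derivative_scaleR dG dF has_vector_derivative_const)
  then show ?thesis unfolding Hk_def[abs_def] by simp
qed

definition Ux :: "real^4 \<Rightarrow> real set" where "Ux \<sigma> = {x. x\<^sup>2 + rr \<sigma> \<noteq> 0}"
lemma open_Ux: "open (Ux \<sigma>)"
  unfolding Ux_def by (rule open_Collect_neq) (intro continuous_intros)+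

lemma qderiv_Suc: "qderiv_iter (Suc k) F = (\<lambda>x. vector_derivative (qderiv_iter k F) (at x))"
  by (simp add: qderiv_iter_def)

lemma iter_eq: "x \<in> Ux \<sigma> \<Longrightarrow> qderiv_iter k (hfun \<sigma>) x = Hk \<sigma> k x"
proof (induction k arbitrary: x)
  case 0
  then show ?case by (simp add: qderiv_iter_def Hk_def hfun_eq Gc_real Fc_real)
next
  case (Suc k)
  have "(qderiv_iter k (hfun \<sigma>) has_vector_derivative Hk \<sigma> (Suc k) x) (at x)"
    apply (rule has_vector_derivative_transform_within_open[OF Hk_deriv open_Ux Suc.prems])
    using Suc.prems Suc.IH by (auto simp: Ux_def)
  then show ?case unfolding qderiv_Suc by (rule vector_derivative_at)
qed

lemma lower_bd:
  fixes x0 r :: real and z :: complex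
  assumes r: "0 \<le> r" and s: "s = sqrt (x0\<^sup>2 + r)" and z: "norm (z - of_real x0) \<le> s / 2"
  shows "s\<^sup>2 / 4 \<le> norm (z\<^sup>2 + of_real r)"
proof -
  define \<rho> where "\<rho> = sqrt r"
  have \<rho>2: "\<rho>\<^sup>2 = r" using r by (simp add: \<rho>_def)
  have fac: "z\<^sup>2 + of_real r = (z - \<i> * of_real \<rho>) * (z + \<i> * of_real \<rho>)"
    unfolding \<rho>2[symmetric] by (simp add: algebra_simps power2_eq_square)
  have n1: "norm (of_real x0 - \<i> * of_real \<rho>) = s"
    unfolding s \<rho>2[symmetric] by (simp add: cmod_def)
  have n2: "norm (of_real x0 + \<i> * of_real \<rho>) = s"
    unfolding s \<rho>2[symmetric] by (simp add: cmod_def)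
  have a1: "s / 2 \<le> norm (z - \<i> * of_real \<rho>)"
  proof -
    have "norm (of_real x0 - \<i> * of_real \<rho>) \<le> norm (z - \<i> * of_real \<rho>) + norm (z - of_real x0)"
      using norm_triangle_sub[of "of_real x0 - \<i> * of_real \<rho>" "z - \<i> * of_real \<rho>"]
        norm_minus_commute[of z "of_real x0"] by simp
    then show ?thesis using n1 z by simp
  qed
  have a2: "s / 2 \<le> norm (z + \<i> * of_real \<rho>)"
  proof -
    have "norm (of_real x0 + \<i> * of_real \<rho>) \<le> norm (z + \<i> * of_real \<rho>) + norm (z - of_real x0)"
      using norm_triangle_sub[of "of_real x0 + \<i> * of_real \<rho>" "z + \<i> * of_real \<rho>"]
        norm_minus_commute[of z "of_real x0"] by simp
    then show ?thesis using n2 z by simp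
  qed
  have s0: "0 \<le> s" using s r by simp
  have "s\<^sup>2 / 4 = (s/2) * (s/2)" by (simp add: power2_eq_square)
  also have "\<dots> \<le> norm (z - \<i> * of_real \<rho>) * norm (z + \<i> * of_real \<rho>)"
    using a1 a2 s0 by (intro mult_mono) auto
  also have "\<dots> = norm (z\<^sup>2 + of_real r)" unfolding fac norm_mult ..
  finally show ?thesis .
qed

lemma norm_wv: "norm (wv \<sigma>) = sqrt (rr \<sigma>)"
  by (simp add: norm_vec_def L2_set_def sum_4 wv_def rr_def add.assoc)

lemma line_bound:
  assumes s: "s = sqrt ((\<sigma>$1)\<^sup>2 + rr \<sigma>)" and s0: "0 < s"
  shows "norm (qderiv_iter k (hfun \<sigma>) (\<sigma>$1)) \<le> fact k * 40 / s^3 / (s/2)^k"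
proof -
  define x0 where "x0 = \<sigma>$1"
  define r where "r = rr \<sigma>"
  have r0: "0 \<le> r" unfolding r_def by (rule rr_nonneg)
  define \<xi> where "\<xi> = complex_of_real x0"
  have lb: "s\<^sup>2 / 4 \<le> norm (z\<^sup>2 + of_real r)" if "norm (\<xi> - z) \<le> s/2" for z
    using lower_bd[OF r0, of s x0 z] that s unfolding x0_def r_def \<xi>_def by (simp add: norm_minus_commute)
  have cb: "cball \<xi> (s/2) \<subseteq> Sc r"
  proof
    fix z assume "z \<in> cball \<xi> (s/2)"
    then have "norm (\<xi> - z) \<le> s/2" by (simp add: dist_norm)
    then have "s\<^sup>2/4 \<le> norm (z\<^sup>2 + of_real r)" by (rule lb)
    moreover have "0 < s\<^sup>2/4" using s0 by simp
    ultimately show "z \<in> Sc r" unfolding Sc_def by auto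
  qed
  have x0s: "\<bar>x0\<bar> \<le> s" unfolding s x0_def using rr_nonneg[of \<sigma>]
    by (metis real_sqrt_abs real_sqrt_le_mono le_add_same_cancel1)
  have Fb: "norm (Fc r z) \<le> 16 / s^4" if "norm (\<xi> - z) = s/2" for z
  proof -
    have l: "s\<^sup>2/4 \<le> norm (z\<^sup>2 + of_real r)" using lb that by simp
    have p: "0 < s\<^sup>2/4" using s0 by simp
    have "norm (Fc r z) = 1 / (norm (z\<^sup>2 + of_real r))\<^sup>2" by (simp add: Fc_def norm_divide norm_power)
    also have "\<dots> \<le> 1 / (s\<^sup>2/4)\<^sup>2"
      using l p by (intro divide_left_mono power_mono mult_pos_pos) auto
    also have "\<dots> = 16 / s^4" by (simp add: power2_eq_square power4_eq_xxxx)
    finally show ?thesis .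
  qed
  have Gb: "norm (Gc r z) \<le> 24 / s^3" if "norm (\<xi> - z) = s/2" for z
  proof -
    have "norm z \<le> norm \<xi> + norm (\<xi> - z)" by (metis norm_triangle_sub add.commute norm_minus_commute)
    also have "\<dots> \<le> 3 * s / 2" using that x0s by (simp add: \<xi>_def)
    finally have nz: "norm z \<le> 3 * s / 2" .
    have "norm (Gc r z) = norm z * norm (Fc r z)" by (simp add: Gc_def norm_mult)
    also have "\<dots> \<le> (3 * s / 2) * (16 / s^4)" using nz Fb[OF that] s0 by (intro mult_mono) auto
    also have "\<dots> = 24 / s^3" using s0 by (simp add: power4_eq_xxxx power3_eq_cube field_simps)
    finally show ?thesis .
  qed
  have s2: "0 < s/2" using s0 by simp
  have cF: "norm ((deriv ^^ k) (Fc r) \<xi>) \<le> fact k * (16 / s^4) / (s/2)^k"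
    apply (rule Cauchy_inequality[OF _ _ s2 Fb])
    using holomorphic_on_subset[OF Fc_holo] cb ball_subset_cball holomorphic_on_imp_continuous_on
    by blast+
  have cG: "norm ((deriv ^^ k) (Gc r) \<xi>) \<le> fact k * (24 / s^3) / (s/2)^k"
    apply (rule Cauchy_inequality[OF _ _ s2 Gb])
    using holomorphic_on_subset[OF Gc_holo] cb ball_subset_cball holomorphic_on_imp_continuous_on
    by blast+
  have xU: "x0 \<in> Ux \<sigma>"
  proof -
    have "0 < x0\<^sup>2 + r" using s0 s unfolding x0_def r_def by simp
    then show ?thesis unfolding Ux_def r_def by simp
  qed
  have "norm (qderiv_iter k (hfun \<sigma>) (\<sigma>$1)) = norm (Hk \<sigma> k x0)" using iter_eq[OF xU] x0_def by simp
  also have "\<dots> \<le> \<bar>Re ((deriv ^^ k) (Gc r) \<xi>)\<bar> + \<bar>Re ((deriv ^^ k) (Fc r) \<xi>)\<bar> * sqrt r"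
    unfolding Hk_def r_def \<xi>_def
    by (rule order_trans[OF norm_triangle_ineq]) (simp add: norm_wv)
  also have "\<dots> \<le> norm ((deriv ^^ k) (Gc r) \<xi>) + norm ((deriv ^^ k) (Fc r) \<xi>) * s"
  proof -
    have "sqrt r \<le> s" unfolding s r_def by simp
    then show ?thesis using r0 by (intro add_mono mult_mono abs_Re_le_cmod) auto
  qed
  also have "\<dots> \<le> fact k * (24 / s^3) / (s/2)^k + fact k * (16 / s^4) / (s/2)^k * s"
    using cG cF s0 by (intro add_mono mult_right_mono) auto
  also have "\<dots> = fact k * 40 / s^3 / (s/2)^k"
    using s0 by (simp add: field_simps power4_eq_xxxx power3_eq_cube)
  finally show ?thesis .
qed

lemma norm3e: "norm (t :: real^3) = sqrt ((t$1)\<^sup>2 + (t$2)\<^sup>2 + (t$3)\<^sup>2)"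
  by (simp add: norm_vec_def L2_set_def sum_3)

lemma hnorm_sq: "(hnorm p)\<^sup>2 = sqrt (norm (snd p) ^ 4 + (norm (fst p))\<^sup>2)"
proof -
  have "(hnorm p)\<^sup>2 = ((norm (snd p) ^ 4 + (norm (fst p))\<^sup>2) powr (1/4)) powr 2"
    unfolding hnorm_def by (simp add: powr_realpow[symmetric])
  also have "\<dots> = sqrt (norm (snd p) ^ 4 + (norm (fst p))\<^sup>2)"
    by (simp add: powr_powr powr_half_sqrt)
  finally show ?thesis .
qed

lemma hnorm_nonneg: "0 \<le> hnorm p" by (simp add: hnorm_def)

lemma kernel_bound:
  fixes p :: "'m::finite hpt"
  assumes hp: "0 < hnorm p"
  shows "norm (szego_K c p) \<le> (\<bar>c\<bar> * fact (2 * CARD('m)) * 40 * 2 ^ (2 * CARD('m))) / hnorm p ^ (6 + 4 * CARD('m))"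
proof -
  define m where "m = CARD('m)"
  define \<sigma> :: "real^4" where "\<sigma> = vector [norm (snd p) ^ 2, fst p $ 1, fst p $ 2, fst p $ 3]"
  define s where "s = sqrt ((\<sigma>$1)\<^sup>2 + rr \<sigma>)"
  have s_eq: "s = (hnorm p)\<^sup>2"
    unfolding hnorm_sq s_def \<sigma>_def rr_def norm3e[of "fst p"] using hnorm_sq
    by (simp add: power_mult[symmetric] add.assoc)
  have s0: "0 < s" using hp s_eq by simp
  have K: "szego_K c p = c *\<^sub>R qderiv_iter (2 * m) (hfun \<sigma>) (\<sigma>$1)"
    by (simp add: szego_K_def szego_s_def hfun_def \<sigma>_def m_def)
  have "norm (szego_K c p) \<le> \<bar>c\<bar> * (fact (2*m) * 40 / s^3 / (s/2)^(2*m))"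
    unfolding K norm_scaleR by (intro mult_left_mono line_bound[OF s_def s0]) auto
  also have "\<dots> = (\<bar>c\<bar> * fact (2 * m) * 40 * 2 ^ (2 * m)) / s ^ (3 + 2 * m)"
    using s0 by (simp add: field_simps power_add power_divide)
  also have "\<dots> = (\<bar>c\<bar> * fact (2 * m) * 40 * 2 ^ (2 * m)) / hnorm p ^ (6 + 4 * m)"
    unfolding s_eq by (simp add: power_mult[symmetric] algebra_simps)
  finally show ?thesis unfolding m_def .
qed


lemma ball_emeasure_le:
  fixes c :: "'a::euclidean_space"
  assumes "0 \<le> \<rho>"
  shows "emeasure lborel (ball c \<rho>) \<le> ennreal ((2 * \<rho>) ^ DIM('a))"
proof -
  have sub: "ball c \<rho> \<subseteq> cbox (c - \<rho> *\<^sub>R One) (c + \<rho> *\<^sub>R One)"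
  proof
    fix x assume "x \<in> ball c \<rho>"
    then have "norm (x - c) < \<rho>" by (simp add: dist_norm norm_minus_commute)
    then have "\<bar>(x - c) \<bullet> i\<bar> \<le> \<rho>" if "i \<in> Basis" for i
      using Basis_le_norm[OF that, of "x - c"] by simp
    then show "x \<in> cbox (c - \<rho> *\<^sub>R One) (c + \<rho> *\<^sub>R One)"
      by (auto simp: mem_box inner_diff_left inner_add_left abs_le_iff algebra_simps)
  qed
  have "emeasure lborel (ball c \<rho>) \<le> emeasure lborel (cbox (c - \<rho> *\<^sub>R One) (c + \<rho> *\<^sub>R One))"
    by (rule emeasure_mono[OF sub]) simp
  also have "\<dots> = ennreal ((2 * \<rho>) ^ DIM('a))"
    using assms by (simp add: emeasure_lborel_cbox_eq inner_diff_left inner_add_left algebra_simps)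
  finally show ?thesis .
qed

definition Nq :: "'m::finite hpt \<Rightarrow> real" where
  "Nq p = norm (snd p) ^ 4 + (norm (fst p))\<^sup>2"

lemma hnorm_Nq: "hnorm p = Nq p powr (1/4)" by (simp add: hnorm_def Nq_def)
lemma Nq_nonneg: "0 \<le> Nq p" by (simp add: Nq_def)

lemma hnorm_less_iff: assumes r: "0 < r" shows "hnorm p < r \<longleftrightarrow> Nq p < r ^ 4"
proof -
  have "(hnorm p) ^ 4 = Nq p"
  proof (cases "Nq p = 0")
    case True then show ?thesis by (simp add: hnorm_Nq)
  next
    case False
    then have "Nq p > 0" using Nq_nonneg[of p] by simp
    then show ?thesis unfolding hnorm_Nq by (simp add: powr_realpow[symmetric] powr_powr)
  qed
  moreover have "0 \<le> hnorm p" by (simp add: hnorm_def)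
  ultimately show ?thesis using r
    by (metis power_less_imp_less_base power_strict_mono less_imp_le zero_less_numeral)
qed

lemma cont_hmult_hinv: "continuous_on UNIV (\<lambda>u. hmult (hinv g) u)"
  unfolding hmult_def hinv_def
  by (intro continuous_intros continuous_on_vec_lambda) 

lemma open_hball: assumes "0 < r" shows "open (hball g r)"
proof -
  have "hball g r = {u. Nq (hmult (hinv g) u) < r ^ 4}"
    unfolding hball_def hrho_def using hnorm_less_iff[OF assms] by blast
  also have "open \<dots>"
    unfolding Nq_def
    by (rule open_Collect_less) (intro continuous_intros cont_hmult_hinv[THEN continuous_on_compose2] | simp)+
  finally show ?thesis .
qed

lemma hball_emeasure:
  fixes g :: "'m::finite hpt"
  assumes r: "0 < r"
  shows "emeasure lborel (hball g r) \<le> ennreal ((2 * r\<^sup>2) ^ 3 * (2 * r) ^ (4 * CARD('m)))"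
proof -
  let ?S = "hball g r"
  have Sm: "?S \<in> sets (lborel \<Otimes>\<^sub>M lborel)"
    unfolding lborel_prod sets_lborel by (rule borel_open[OF open_hball[OF r]])
  have slice: "emeasure lborel ((\<lambda>x. (x, y)) -` ?S) \<le> ennreal ((2 * r\<^sup>2) ^ 3) * indicator (ball (snd g) r) y"
    for y :: "(real^4)^'m"
  proof -
    define c where "c = fst g + 2 *\<^sub>R Bf (snd g) y"
    have mem: "norm (y - snd g) < r \<and> norm (x - c) < r\<^sup>2" if "(x, y) \<in> ?S" for x
    proof -
      have h: "hnorm (x - c, y - snd g) < r"
        using that unfolding hball_def hrho_def hmult_hinv_eq c_def by (simp add: algebra_simps)
      have "norm (y - snd g) < r" using hnorm_y[of "(x - c, y - snd g)"] h by simp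
      moreover have "sqrt (norm (x - c)) < r" using hnorm_t[of "(x - c, y - snd g)"] h by simp
      then have "(sqrt (norm (x - c)))\<^sup>2 < r\<^sup>2"
        by (intro power_strict_mono) auto
      then have "norm (x - c) < r\<^sup>2" by simp
      ultimately show ?thesis by simp
    qed
    show ?thesis
    proof (cases "y \<in> ball (snd g) r")
      case True
      have "(\<lambda>x. (x, y)) -` ?S \<subseteq> ball c (r\<^sup>2)"
        using mem by (auto simp: dist_norm norm_minus_commute)
      then have "emeasure lborel ((\<lambda>x. (x, y)) -` ?S) \<le> emeasure lborel (ball c (r\<^sup>2))"
        by (intro emeasure_mono) auto
      also have "\<dots> \<le> ennreal ((2 * r\<^sup>2) ^ 3)"
        using ball_emeasure_le[of "r\<^sup>2" c] by simp
      finally show ?thesis using True by simp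
    next
      case False
      then have "(\<lambda>x. (x, y)) -` ?S = {}"
        using mem by (auto simp: dist_norm norm_minus_commute)
      then show ?thesis by simp
    qed
  qed
  have "emeasure lborel ?S = emeasure (lborel \<Otimes>\<^sub>M lborel) ?S" unfolding lborel_prod ..
  also have "\<dots> = (\<integral>\<^sup>+y. emeasure lborel ((\<lambda>x. (x, y)) -` ?S) \<partial>lborel)"
    by (rule lborel_pair.emeasure_pair_measure_alt2[OF Sm])
  also have "\<dots> \<le> (\<integral>\<^sup>+y. ennreal ((2 * r\<^sup>2) ^ 3) * indicator (ball (snd g) r) y \<partial>lborel)"
    by (intro nn_integral_mono slice)
  also have "\<dots> = ennreal ((2 * r\<^sup>2) ^ 3) * emeasure lborel (ball (snd g) r)"
    by (rule nn_integral_cmult_indicator) simp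
  also have "\<dots> \<le> ennreal ((2 * r\<^sup>2) ^ 3) * ennreal ((2 * r) ^ (4 * CARD('m)))"
    using ball_emeasure_le[of r "snd g"] r by (intro mult_left_mono) (auto simp: mult.commute)
  also have "\<dots> = ennreal ((2 * r\<^sup>2) ^ 3 * (2 * r) ^ (4 * CARD('m)))"
    using r by (simp add: ennreal_mult)
  finally show ?thesis .
qed


lemma hrho_self: "hrho g g = 0"
  by (simp add: hrho_def hmult_hinv_eq Bf_self hnorm_def)

lemma maxfun_ball:
  fixes f :: "'m::finite hpt \<Rightarrow> real^4"
  assumes r: "0 < r"
  shows "(\<integral>\<^sup>+ u \<in> hball g r. ennreal (norm (f u)) \<partial>lborel)
      \<le> ennreal ((2 * r\<^sup>2) ^ 3 * (2 * r) ^ (4 * CARD('m))) * maxfun f g"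
proof -
  define X where "X = (\<integral>\<^sup>+ u \<in> hball g r. ennreal (norm (f u)) \<partial>lborel)"
  define \<mu> where "\<mu> = emeasure lborel (hball g r)"
  define A where "A = ennreal ((2 * r\<^sup>2) ^ 3 * (2 * r) ^ (4 * CARD('m)))"
  have gin: "g \<in> hball g r" using r by (simp add: hball_def hrho_self)
  have M: "X / \<mu> \<le> maxfun f g"
    unfolding maxfun_def X_def \<mu>_def
    by (rule SUP_upper2[of "(g, r)"]) (use r gin in auto)
  have \<mu>A: "\<mu> \<le> A" unfolding \<mu>_def A_def by (rule hball_emeasure[OF r])
  have A0: "A \<noteq> 0" unfolding A_def using r by simp
  have Atop: "A < top" unfolding A_def by simp
  show ?thesis
  proof (cases "\<mu> = 0")
    case True
    show ?thesis
    proof (cases "X = 0")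
      case True then show ?thesis unfolding X_def by simp
    next
      case False
      then have "maxfun f g = top" using M \<open>\<mu> = 0\<close> by (simp add: top_unique)
      then show ?thesis using A0 unfolding A_def[symmetric] X_def[symmetric] by (simp add: ennreal_mult_top)
    qed
  next
    case False
    have "\<mu> < top" using \<mu>A Atop by (rule le_less_trans)
    then have "X = \<mu> * (X / \<mu>)"
      using False by (simp add: ennreal_times_divide mult.commute[of \<mu>] mult_divide_eq_ennreal)
    also have "\<dots> \<le> A * maxfun f g" using \<mu>A M by (rule mult_mono) auto
    finally show ?thesis unfolding X_def A_def .
  qed
qed

lemma L1_loc_meas:
  assumes "L1_loc f"
  shows "f \<in> borel_measurable lborel"
proof -
  have m: "(\<lambda>x. indicator (cball 0 (real n)) x *\<^sub>R f x) \<in> borel_measurable lborel" for n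
    using assms unfolding L1_loc_def set_integrable_def
    by (meson borel_measurable_integrable compact_cball)
  have "(\<lambda>n. indicator (cball 0 (real n)) x *\<^sub>R f x) \<longlonglongrightarrow> f x" for x
  proof (rule tendsto_eventually)
    obtain N :: nat where "norm x \<le> real N" using real_arch_simple by blast
    then show "\<forall>\<^sub>F n in sequentially. indicator (cball 0 (real n)) x *\<^sub>R f x = f x"
      unfolding eventually_sequentially
      by (intro exI[of _ N]) (auto simp: indicator_def dist_norm)
  qed
  then show ?thesis by (rule borel_measurable_LIMSEQ_metric[OF m])
qed


lemma norm_sq4: "(norm (x::real^4))\<^sup>2 = (x$1)\<^sup>2 + (x$2)\<^sup>2 + (x$3)\<^sup>2 + (x$4)\<^sup>2"
  unfolding power2_norm_eq_inner inner_vec_def sum_4 by (simp add: power2_eq_square)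

lemma norm_qmult: "norm (qmult a b) = norm a * norm b"
proof -
  have "(norm (qmult a b))\<^sup>2 = ((norm a) * (norm b))\<^sup>2"
    unfolding power_mult_distrib norm_sq4 by (simp add: qmult_def) algebra
  then show ?thesis by (simp add: power2_eq_iff_nonneg)
qed

lemma hrho_cont: "continuous_on UNIV (\<lambda>u. hrho g u)"
proof -
  have eq: "(\<lambda>u. hrho g u) = (\<lambda>u. Nq (hmult (hinv g) u) powr (1/4))"
  proof
    fix u show "hrho g u = Nq (hmult (hinv g) u) powr (1/4)"
      by (subst hrho_sym) (simp add: hrho_def hnorm_Nq)
  qed
  have "continuous_on UNIV (\<lambda>u. Nq (hmult (hinv g) u) powr (1/4))"
    by (intro continuous_on_powr' continuous_intros)
      (auto simp: Nq_def intro!: continuous_intros cont_hmult_hinv[THEN continuous_on_compose2])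
  then show ?thesis unfolding eq .
qed

lemma hrho_meas: "(\<lambda>u. hrho g u) \<in> borel_measurable lborel"
  using borel_measurable_continuous_onI[OF hrho_cont] by simp

lemma phi_bound:
  fixes \<phi> :: "real \<Rightarrow> real" and x :: real
  assumes phi0: "\<And>x. x < 1/2 \<Longrightarrow> \<phi> x = 0"
    and phi01: "\<And>x. 1/2 \<le> x \<Longrightarrow> x \<le> 1 \<Longrightarrow> 0 \<le> \<phi> x \<and> \<phi> x \<le> 1"
    and phi1: "\<And>x. 1 < x \<Longrightarrow> \<phi> x = 1"
  shows "\<bar>\<phi> x - 1\<bar> \<le> 1"
proof -
  consider "x < 1/2" | "1/2 \<le> x \<and> x \<le> 1" | "1 < x" by linarith
  then show ?thesis
  proof cases
    case 1 then show ?thesis using phi0 by simp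
  next
    case 2 then show ?thesis using phi01[of x] by auto
  next
    case 3 then show ?thesis using phi1 by simp
  qed
qed

lemma dyadic:
  fixes \<rho> \<eta> :: real
  assumes "0 < \<rho>" "\<rho> \<le> \<eta>"
  shows "\<exists>j::nat. \<eta> * (1/2)^(Suc j) < \<rho> \<and> \<rho> \<le> \<eta> * (1/2)^j"
proof -
  have e0: "0 < \<eta>" using assms by simp
  obtain n where "(1/2::real)^n < \<rho> / \<eta>" using real_arch_pow_inv[of "\<rho>/\<eta>" "1/2"] assms e0 by auto
  then have ex: "\<eta> * (1/2)^n < \<rho>" using e0 by (simp add: field_simps)
  define j where "j = (LEAST j. \<eta> * (1/2)^j < \<rho>)"
  have jp: "\<eta> * (1/2)^j < \<rho>" unfolding j_def by (rule LeastI[of _ n]) (rule ex)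
  have j0: "j \<noteq> 0" using jp assms by (intro notI) simp
  then obtain k where k: "j = Suc k" by (cases j) auto
  have "\<not> \<eta> * (1/2)^k < \<rho>" using not_less_Least[of k "\<lambda>j. \<eta> * (1/2)^j < \<rho>"] k j_def by simp
  then show ?thesis using jp k by (intro exI[of _ k]) simp
qed

lemma pointwise:
  fixes b :: "'m::finite hpt \<Rightarrow> real" and f :: "'m hpt \<Rightarrow> real^4" and \<phi> :: "real \<Rightarrow> real" and c :: real and \<eta> :: real
  assumes cc: "Cc_infty b" and e0: "0 < \<eta>"
    and phi0: "\<And>x. x < 1/2 \<Longrightarrow> \<phi> x = 0"
    and phi01: "\<And>x. 1/2 \<le> x \<Longrightarrow> x \<le> 1 \<Longrightarrow> 0 \<le> \<phi> x \<and> \<phi> x \<le> 1"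
    and phi1: "\<And>x. 1 < x \<Longrightarrow> \<phi> x = 1"
  defines "Ck \<equiv> \<bar>c\<bar> * fact (2 * CARD('m)) * 40 * 2 ^ (2 * CARD('m)) + 1"
  defines "c0 \<equiv> 3 * gradH_Linf b * Ck"
  defines "rj \<equiv> (\<lambda>j::nat. 2 * \<eta> * (1/2)^j)"
  shows "ennreal (norm ((\<phi> (hrho g u / \<eta>) - 1) *\<^sub>R ((b g - b u) *\<^sub>R qmult (szego_K c (hmult (hinv u) g)) (f u))))
    \<le> (\<Sum>j. ennreal (c0 * (4 / rj j) ^ (5 + 4 * CARD('m))) * (ennreal (norm (f u)) * indicator (hball g (rj j)) u))"
    (is "ennreal (norm ?X) \<le> suminf ?T")
proof -
  define \<rho> where "\<rho> = hrho g u"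
  define L where "L = gradH_Linf b"
  define n where "n = 5 + 4 * CARD('m)"
  have L0: "0 \<le> L" unfolding L_def by (rule gradH_Linf_nonneg[OF cc])
  have Ck1: "1 \<le> Ck" unfolding Ck_def by simp
  have r0: "0 \<le> \<rho>" unfolding \<rho>_def hrho_def by (rule hnorm_nonneg)
  have pb: "\<bar>b g - b u\<bar> \<le> 3 * \<rho> * L"
    using path_bound[OF cc, of g u] unfolding \<rho>_def hrho_def L_def .
  have T0: "0 \<le> suminf ?T" by simp
  consider "\<eta> < \<rho>" | "\<rho> = 0" | "0 < \<rho> \<and> \<rho> \<le> \<eta>" using r0 by linarith
  then show ?thesis
  proof cases
    case 1
    then have "\<phi> (hrho g u / \<eta>) = 1" using e0 phi1 unfolding \<rho>_def by simp
    then show ?thesis by simp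
  next
    case 2
    then have "b g - b u = 0" using pb by simp
    then show ?thesis by simp
  next
    case 3
    then have rp: "0 < \<rho>" and re: "\<rho> \<le> \<eta>" by auto
    obtain j where j1: "\<eta> * (1/2)^(Suc j) < \<rho>" and j2: "\<rho> \<le> \<eta> * (1/2)^j"
      using dyadic[OF rp re] by blast
    have rj4: "rj j / 4 = \<eta> * (1/2)^(Suc j)" unfolding rj_def by simp
    have rjp: "0 < rj j" unfolding rj_def using e0 by simp
    have K: "norm (szego_K c (hmult (hinv u) g)) \<le> Ck / \<rho> ^ (6 + 4 * CARD('m))"
    proof -
      have "hnorm (hmult (hinv u) g) = \<rho>" unfolding \<rho>_def hrho_def ..
      then have "norm (szego_K c (hmult (hinv u) g)) \<le> (\<bar>c\<bar> * fact (2 * CARD('m)) * 40 * 2 ^ (2 * CARD('m))) / \<rho> ^ (6 + 4 * CARD('m))"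
        using kernel_bound[of "hmult (hinv u) g" c] rp by simp
      also have "\<dots> \<le> Ck / \<rho> ^ (6 + 4 * CARD('m))"
        unfolding Ck_def using rp by (intro divide_right_mono) auto
      finally show ?thesis .
    qed
    have pw: "\<rho> ^ (6 + 4 * CARD('m)) = \<rho> * \<rho> ^ n"
    proof -
      have "6 + 4 * CARD('m) = Suc n" unfolding n_def by simp
      then show ?thesis by (simp only: power_Suc)
    qed
    have "norm ?X = \<bar>\<phi> (hrho g u / \<eta>) - 1\<bar> * (\<bar>b g - b u\<bar> * (norm (szego_K c (hmult (hinv u) g)) * norm (f u)))"
      by (simp add: norm_qmult abs_mult)
    also have "\<dots> \<le> 1 * ((3 * \<rho> * L) * ((Ck / \<rho> ^ (6 + 4 * CARD('m))) * norm (f u)))"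
      using phi_bound[of \<phi>, OF phi0 phi01 phi1] pb K rp L0 Ck1
      by (intro mult_mono mult_nonneg_nonneg) auto
    also have "\<dots> = c0 * (1 / \<rho> ^ n) * norm (f u)"
      unfolding pw c0_def L_def using rp by (simp add: field_simps)
    also have "\<dots> \<le> c0 * (4 / rj j) ^ n * norm (f u)"
    proof -
      have "(rj j / 4) ^ n \<le> \<rho> ^ n" using j1 rjp unfolding rj4[symmetric]
        by (intro power_mono) auto
      then have "1 / \<rho> ^ n \<le> 1 / (rj j / 4) ^ n"
        using rjp rp by (intro divide_left_mono) auto
      also have "\<dots> = (4 / rj j) ^ n" by (simp add: power_divide)
      finally have "1 / \<rho> ^ n \<le> (4 / rj j) ^ n" .
      moreover have "0 \<le> c0" unfolding c0_def using L0 Ck1 L_def by simp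
      ultimately show ?thesis by (intro mult_right_mono mult_left_mono) auto
    qed
    finally have le: "norm ?X \<le> c0 * (4 / rj j) ^ n * norm (f u)" .
    have uin: "u \<in> hball g (rj j)"
    proof -
      have "hrho u g = \<rho>" unfolding \<rho>_def by (rule hrho_sym[symmetric])
      moreover have "\<eta> * (1/2)^j < rj j" unfolding rj_def using e0 by simp
      ultimately show ?thesis unfolding hball_def using j2 by simp
    qed
    have c00: "0 \<le> c0 * (4 / rj j) ^ n" unfolding c0_def using L0 Ck1 rjp L_def by simp
    have "ennreal (norm ?X) \<le> ennreal (c0 * (4 / rj j) ^ n * norm (f u))"
      using le by (rule ennreal_leI)
    also have "\<dots> = ?T j" using uin c00 unfolding n_def by (simp add: ennreal_mult'')
    also have "\<dots> \<le> suminf ?T" using sum_le_suminf[OF summableI, of "{j}" ?T] by simp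
    finally show ?thesis .
  qed
qed

lemma const_identity:
  fixes r :: real and m :: nat
  assumes r: "0 < r"
  shows "(4 / r) ^ (5 + 4 * m) * ((2 * r\<^sup>2) ^ 3 * (2 * r) ^ (4 * m)) = 4 ^ (5 + 4 * m) * 2 ^ (3 + 4 * m) * r"
proof -
  have a: "(2 * r\<^sup>2) ^ 3 * (2 * r) ^ (4 * m) = 2 ^ (3 + 4 * m) * (r * r ^ (5 + 4 * m))"
  proof -
    have r6: "r ^ 6 = r * r ^ 5" by (simp add: eval_nat_numeral)
    show ?thesis by (simp add: power_mult_distrib power_add power_mult[symmetric] algebra_simps r6)
  qed
  show ?thesis unfolding a using r by (simp add: power_divide field_simps)
qed

lemma geom_sum_ennreal:
  fixes K :: real assumes "0 \<le> K"
  shows "(\<Sum>j. ennreal (K * (1/2)^j)) = ennreal (2 * K)"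
proof -
  have s: "summable (\<lambda>j. K * (1/2::real)^j)" by (intro summable_mult summable_geometric) simp
  have e: "(\<Sum>j. K * (1/2::real)^j) = 2 * K"
    using suminf_mult[OF summable_geometric[of "1/2::real"], of K] suminf_geometric[of "1/2::real"] by simp
  have "(\<Sum>j. ennreal (K * (1/2)^j)) = ennreal (\<Sum>j. K * (1/2::real)^j)"
    by (rule suminf_ennreal2[OF _ s]) (simp add: assms)
  then show ?thesis unfolding e .
qed

lemma phi_abs:
  fixes \<phi> :: "real \<Rightarrow> real" and x :: real
  assumes phi0: "\<And>x. x < 1/2 \<Longrightarrow> \<phi> x = 0"
    and phi01: "\<And>x. 1/2 \<le> x \<Longrightarrow> x \<le> 1 \<Longrightarrow> 0 \<le> \<phi> x \<and> \<phi> x \<le> 1"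
    and phi1: "\<And>x. 1 < x \<Longrightarrow> \<phi> x = 1"
  shows "\<bar>\<phi> x\<bar> \<le> 1"
proof -
  consider "x < 1/2" | "1/2 \<le> x \<and> x \<le> 1" | "1 < x" by linarith
  then show ?thesis
  proof cases
    case 1 then show ?thesis using phi0 by simp
  next
    case 2 then show ?thesis using phi01[of x] by auto
  next
    case 3 then show ?thesis using phi1 by simp
  qed
qed


theorem lemma4p3:
  fixes \<phi> :: "real \<Rightarrow> real" and c :: real
  assumes phi_smooth: "smooth_fun \<phi>"
    and phi0: "\<And>x. x < 1/2 \<Longrightarrow> \<phi> x = 0"
    and phi01: "\<And>x. 1/2 \<le> x \<Longrightarrow> x \<le> 1 \<Longrightarrow> 0 \<le> \<phi> x \<and> \<phi> x \<le> 1"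
    and phi1: "\<And>x. 1 < x \<Longrightarrow> \<phi> x = 1"
  shows "\<exists>C>0. \<forall>(b :: 'm::finite hpt \<Rightarrow> real) \<eta> f g.
     Cc_infty b \<longrightarrow> 0 < \<eta> \<longrightarrow> L1_loc f \<longrightarrow>
     integrable lborel (\<lambda>u. (b g - b u) *\<^sub>R qmult (szego_K c (hmult (hinv u) g)) (f u)) \<longrightarrow>
     ennreal (norm (comm_C_eta \<phi> \<eta> c b f g - comm_C c b f g))
       \<le> ennreal (C * \<eta> * gradH_Linf b) * maxfun f g"
proof -
  define m where "m = CARD('m)"
  define n where "n = 5 + 4 * m"
  define Ck where "Ck = \<bar>c\<bar> * fact (2 * CARD('m)) * 40 * 2 ^ (2 * CARD('m)) + 1"
  define C where "C = 3 * Ck * 4 ^ n * 2 ^ (3 + 4 * m) * 4"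
  have Ck1: "1 \<le> Ck" unfolding Ck_def by simp
  have C0: "0 < C" unfolding C_def using Ck1 by simp
  have phi_cont: "continuous_on UNIV \<phi>"
  proof -
    have "isCont \<phi> x" for x using smooth_diff[OF phi_smooth, of x] differentiable_imp_continuous_within by blast
    then show ?thesis by (simp add: continuous_on_eq_continuous_at)
  qed
  have main: "ennreal (norm (comm_C_eta \<phi> \<eta> c b f g - comm_C c b f g))
       \<le> ennreal (C * \<eta> * gradH_Linf b) * maxfun f g"
    if cc: "Cc_infty b" and e0: "0 < \<eta>" and fl: "L1_loc f"
      and intF: "integrable lborel (\<lambda>u. (b g - b u) *\<^sub>R qmult (szego_K c (hmult (hinv u) g)) (f u))"
    for b :: "'m hpt \<Rightarrow> real" and \<eta> f g
  proof -
    define F where "F = (\<lambda>u. (b g - b u) *\<^sub>R qmult (szego_K c (hmult (hinv u) g)) (f u))"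
    define \<Phi> where "\<Phi> = (\<lambda>u. \<phi> (hrho g u / \<eta>))"
    define L where "L = gradH_Linf b"
    define c0 where "c0 = 3 * L * Ck"
    define rj where "rj = (\<lambda>j::nat. 2 * \<eta> * (1/2::real)^j)"
    define M where "M = maxfun f g"
    have L0: "0 \<le> L" unfolding L_def by (rule gradH_Linf_nonneg[OF cc])
    have c00: "0 \<le> c0" unfolding c0_def using L0 Ck1 by simp
    have rjp: "0 < rj j" for j unfolding rj_def using e0 by simp
    have intF': "integrable lborel F" using intF unfolding F_def .
    have Fm: "F \<in> borel_measurable lborel" by (rule borel_measurable_integrable[OF intF'])
    have \<Phi>m: "\<Phi> \<in> borel_measurable lborel"
    proof -
      have "continuous_on UNIV \<Phi>" unfolding \<Phi>_def
        by (rule continuous_on_compose2[OF phi_cont]) (use e0 in \<open>auto intro!: continuous_intros hrho_cont\<close>)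
      then show ?thesis using borel_measurable_continuous_onI by simp
    qed
    have int\<Phi>: "integrable lborel (\<lambda>u. \<Phi> u *\<^sub>R F u)"
    proof (rule Bochner_Integration.integrable_bound[OF intF'])
      show "(\<lambda>u. \<Phi> u *\<^sub>R F u) \<in> borel_measurable lborel" using \<Phi>m Fm by measurable
      show "AE u in lborel. norm (\<Phi> u *\<^sub>R F u) \<le> norm (F u)"
        using phi_abs[of \<phi>, OF phi0 phi01 phi1]
        by (intro AE_I2) (simp add: \<Phi>_def mult_left_le_one_le)
    qed
    have eta_eq: "comm_C_eta \<phi> \<eta> c b f g = integral\<^sup>L lborel (\<lambda>u. \<Phi> u *\<^sub>R F u)"
      unfolding comm_C_eta_def \<Phi>_def F_def by (simp add: scaleR_scaleR mult.commute)
    have C_eq: "comm_C c b f g = integral\<^sup>L lborel F"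
      unfolding comm_C_def F_def ..
    have diff: "comm_C_eta \<phi> \<eta> c b f g - comm_C c b f g = integral\<^sup>L lborel (\<lambda>u. (\<Phi> u - 1) *\<^sub>R F u)"
      unfolding eta_eq C_eq
      using Bochner_Integration.integral_diff[OF int\<Phi> intF', symmetric] by (simp add: scaleR_diff_left)
    have intD: "integrable lborel (\<lambda>u. (\<Phi> u - 1) *\<^sub>R F u)"
      using Bochner_Integration.integrable_diff[OF int\<Phi> intF'] by (simp add: scaleR_diff_left)
    define T where "T = (\<lambda>j u. ennreal (c0 * (4 / rj j) ^ n) * (ennreal (norm (f u)) * indicator (hball g (rj j)) u))"
    have fm: "f \<in> borel_measurable lborel" by (rule L1_loc_meas[OF fl])
    have Bm: "hball g (rj j) \<in> sets lborel" for j
      using borel_open[OF open_hball[OF rjp[of j]]] by simp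
    have Tm: "T j \<in> borel_measurable lborel" for j
      unfolding T_def using fm Bm[of j] by measurable
    have "ennreal (norm (comm_C_eta \<phi> \<eta> c b f g - comm_C c b f g))
        \<le> (\<integral>\<^sup>+u. ennreal (norm ((\<Phi> u - 1) *\<^sub>R F u)) \<partial>lborel)"
      unfolding diff by (rule integral_norm_bound_ennreal[OF intD])
    also have "\<dots> \<le> (\<integral>\<^sup>+u. (\<Sum>j. T j u) \<partial>lborel)"
    proof (rule nn_integral_mono)
      fix u
      show "ennreal (norm ((\<Phi> u - 1) *\<^sub>R F u)) \<le> (\<Sum>j. T j u)"
        unfolding \<Phi>_def F_def T_def c0_def L_def Ck_def rj_def n_def m_def
        by (rule pointwise[OF cc e0 phi0 phi01 phi1])
    qed
    also have "\<dots> = (\<Sum>j. \<integral>\<^sup>+u. T j u \<partial>lborel)"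
      by (rule nn_integral_suminf[OF Tm])
    also have "\<dots> \<le> (\<Sum>j. ennreal (c0 * 4 ^ n * 2 ^ (3 + 4 * m) * 2 * \<eta> * (1/2)^j) * M)"
    proof (rule suminf_le)
      fix j
      have "(\<integral>\<^sup>+u. T j u \<partial>lborel) = ennreal (c0 * (4 / rj j) ^ n) *
          (\<integral>\<^sup>+u \<in> hball g (rj j). ennreal (norm (f u)) \<partial>lborel)"
        unfolding T_def by (rule nn_integral_cmult) (use fm Bm[of j] in measurable)
      also have "\<dots> \<le> ennreal (c0 * (4 / rj j) ^ n) *
          (ennreal ((2 * (rj j)\<^sup>2) ^ 3 * (2 * rj j) ^ (4 * CARD('m))) * M)"
        unfolding M_def by (intro mult_left_mono maxfun_ball rjp) simp
      also have "\<dots> = ennreal (c0 * ((4 / rj j) ^ n * ((2 * (rj j)\<^sup>2) ^ 3 * (2 * rj j) ^ (4 * m)))) * M"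
        using c00 rjp[of j] by (simp add: ennreal_mult'' mult.assoc m_def)
      also have "\<dots> = ennreal (c0 * 4 ^ n * 2 ^ (3 + 4 * m) * 2 * \<eta> * (1/2)^j) * M"
        unfolding n_def const_identity[OF rjp] by (simp add: rj_def mult.assoc)
      finally show "(\<integral>\<^sup>+u. T j u \<partial>lborel) \<le> ennreal (c0 * 4 ^ n * 2 ^ (3 + 4 * m) * 2 * \<eta> * (1/2)^j) * M" .
    qed simp_all
    also have "\<dots> = (\<Sum>j. ennreal ((c0 * 4 ^ n * 2 ^ (3 + 4 * m) * 2 * \<eta>) * (1/2)^j)) * M"
      by (simp add: mult.assoc)
    also have "\<dots> = ennreal (2 * (c0 * 4 ^ n * 2 ^ (3 + 4 * m) * 2 * \<eta>)) * M"
      using c00 e0 by (subst geom_sum_ennreal) auto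
    also have "\<dots> = ennreal (C * \<eta> * gradH_Linf b) * maxfun f g"
      unfolding C_def c0_def L_def M_def by (simp add: algebra_simps)
    finally show ?thesis .
  qed
  show ?thesis using C0 main by blast
qed


end
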